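(* If $G$ is a graph of diameter $d$ and metric dimension $k$, then \[\frac{TC(\mathcal{H}(G))-1}{d}\leq k\leq TC(\mathcal{H}(G)).\]
   Context: A set $R$ of vertices of a graph $G$ is a resolving set if for each pair $u,v$ of distinct vertices there is $x\in R$ with $d(x,u)\neq d(x,v)$; the metric dimension is the smallest size of a resolving set. The distance hypergraph $\mathcal{H}(G)$ has vertex set $V(G)$ and, as hyperedges, all balls $B(v,r)=\{u: d(u,v)\leq r\}$ for all $v\in V(G)$ and all integers $r\geq 0$. A test cover of a hypergraph is a set of hyperedges such that every vertex lies in one of them and for every pair of distinct vertices one of them contains exactly one of the two; $TC(\cdot)$ denotes the minimum size of a test cover. *)

theory Defs
  imports Complex_Main
begin

definition graph :: "'a set \<Rightarrow> ('a \<Rightarrow> 'a \<Rightarrow> bool) \<Rightarrow> bool" where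
  "graph V E \<longleftrightarrow> finite V \<and> V \<noteq> {} \<and>
     (\<forall>u v. E u v \<longrightarrow> u \<in> V \<and> v \<in> V) \<and>
     (\<forall>u v. E u v \<longrightarrow> E v u) \<and> (\<forall>u. \<not> E u u)"

fun walk :: "('a \<Rightarrow> 'a \<Rightarrow> bool) \<Rightarrow> 'a list \<Rightarrow> bool" where
  "walk E [] = False"
| "walk E [x] = True"
| "walk E (x # y # xs) = (E x y \<and> walk E (y # xs))"

text \<open>A walk of length n from u to v (n edges).\<close>
definition walk_between :: "('a \<Rightarrow> 'a \<Rightarrow> bool) \<Rightarrow> 'a \<Rightarrow> 'a \<Rightarrow> nat \<Rightarrow> bool" where
  "walk_between E u v n \<longleftrightarrow> (\<exists>xs. walk E xs \<and> hd xs = u \<and> last xs = v \<and> length xs = Suc n)"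

definition connected_graph :: "'a set \<Rightarrow> ('a \<Rightarrow> 'a \<Rightarrow> bool) \<Rightarrow> bool" where
  "connected_graph V E \<longleftrightarrow> graph V E \<and> (\<forall>u\<in>V. \<forall>v\<in>V. \<exists>n. walk_between E u v n)"

definition gdist :: "('a \<Rightarrow> 'a \<Rightarrow> bool) \<Rightarrow> 'a \<Rightarrow> 'a \<Rightarrow> nat" where
  "gdist E u v = (LEAST n. walk_between E u v n)"

definition diameter :: "'a set \<Rightarrow> ('a \<Rightarrow> 'a \<Rightarrow> bool) \<Rightarrow> nat" where
  "diameter V E = Max {gdist E u v | u v. u \<in> V \<and> v \<in> V}"

definition resolving_set :: "'a set \<Rightarrow> ('a \<Rightarrow> 'a \<Rightarrow> bool) \<Rightarrow> 'a set \<Rightarrow> bool" where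
  "resolving_set V E R \<longleftrightarrow> R \<subseteq> V \<and>
     (\<forall>u\<in>V. \<forall>v\<in>V. u \<noteq> v \<longrightarrow> (\<exists>x\<in>R. gdist E x u \<noteq> gdist E x v))"

definition metric_dimension :: "'a set \<Rightarrow> ('a \<Rightarrow> 'a \<Rightarrow> bool) \<Rightarrow> nat" where
  "metric_dimension V E = (LEAST k. \<exists>R. resolving_set V E R \<and> card R = k)"

definition gball :: "'a set \<Rightarrow> ('a \<Rightarrow> 'a \<Rightarrow> bool) \<Rightarrow> 'a \<Rightarrow> nat \<Rightarrow> 'a set" where
  "gball V E v r = {u \<in> V. gdist E u v \<le> r}"

definition distance_hyperedges :: "'a set \<Rightarrow> ('a \<Rightarrow> 'a \<Rightarrow> bool) \<Rightarrow> 'a set set" where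
  "distance_hyperedges V E = {gball V E v r | v r. v \<in> V}"

definition test_cover :: "'a set \<Rightarrow> 'a set set \<Rightarrow> 'a set set \<Rightarrow> bool" where
  "test_cover V H T \<longleftrightarrow> T \<subseteq> H \<and> (\<forall>v\<in>V. \<exists>S\<in>T. v \<in> S) \<and>
     (\<forall>u\<in>V. \<forall>v\<in>V. u \<noteq> v \<longrightarrow> (\<exists>S\<in>T. (u \<in> S) \<noteq> (v \<in> S)))"

definition TC :: "'a set \<Rightarrow> 'a set set \<Rightarrow> nat" where
  "TC V H = (LEAST k. \<exists>T. test_cover V H T \<and> finite T \<and> card T = k)"

end

theory Submission
  imports Defs
begin

lemma walk_snoc: "walk E zs \<Longrightarrow> E (last zs) x \<Longrightarrow> walk E (zs @ [x])"
  by (induction E zs rule: walk.induct) auto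

lemma walk_rev: "(\<forall>u v. E u v \<longrightarrow> E v u) \<Longrightarrow> walk E xs \<Longrightarrow> walk E (rev xs)"
proof (induction E xs rule: walk.induct)
  case (3 E x y xs)
  then have "walk E (rev (y # xs))" by simp
  moreover have "last (rev (y # xs)) = y" by simp
  ultimately show ?case using 3 walk_snoc[of E "rev (y#xs)" x] by simp
qed auto

lemma wb_sym: "(\<forall>u v. E u v \<longrightarrow> E v u) \<Longrightarrow> walk_between E u v n \<Longrightarrow> walk_between E v u n"
  unfolding walk_between_def
proof -
  assume s: "\<forall>u v. E u v \<longrightarrow> E v u" and "\<exists>xs. walk E xs \<and> hd xs = u \<and> last xs = v \<and> length xs = Suc n"
  then obtain xs where xs: "walk E xs" "hd xs = u" "last xs = v" "length xs = Suc n" by blast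
  then have "xs \<noteq> []" by auto
  then show "\<exists>xs. walk E xs \<and> hd xs = v \<and> last xs = u \<and> length xs = Suc n"
    using xs walk_rev[OF s xs(1)] by (intro exI[of _ "rev xs"]) (simp add: hd_rev last_rev)
qed

lemma gdist_sym: "(\<forall>u v. E u v \<longrightarrow> E v u) \<Longrightarrow> gdist E u v = gdist E v u"
proof -
  assume s: "\<forall>u v. E u v \<longrightarrow> E v u"
  have "(\<lambda>n. walk_between E u v n) = (\<lambda>n. walk_between E v u n)"
    using wb_sym[OF s] by blast
  then show ?thesis unfolding gdist_def by simp
qed

lemma gdist_refl: "gdist E u u = 0"
proof -
  have "walk_between E u u 0" unfolding walk_between_def by (intro exI[of _ "[u]"]) simp
  then show ?thesis unfolding gdist_def by (rule Least_eq_0)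
qed

lemma gdist_zero:
  assumes "connected_graph V E" "u \<in> V" "v \<in> V" "gdist E u v = 0"
  shows "u = v"
proof -
  obtain n where "walk_between E u v n" using assms unfolding connected_graph_def by blast
  then have "walk_between E u v (gdist E u v)" unfolding gdist_def by (rule LeastI)
  then have "walk_between E u v 0" using assms by simp
  then obtain xs where "hd xs = u" "last xs = v" "length xs = 1" unfolding walk_between_def by auto
  then show ?thesis by (cases xs) auto
qed

lemma gdist_le_diam:
  assumes "graph V E" "u \<in> V" "v \<in> V"
  shows "gdist E u v \<le> diameter V E"
proof -
  have eq: "{gdist E u v | u v. u \<in> V \<and> v \<in> V} = (\<lambda>(u,v). gdist E u v) ` (V \<times> V)" by auto
  have "finite V" using assms unfolding graph_def by simp
  then have "finite {gdist E u v | u v. u \<in> V \<and> v \<in> V}" unfolding eq by simp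
  then show ?thesis unfolding diameter_def using assms by (intro Max_ge) auto
qed

theorem proposition3:
  fixes V :: "'a set" and E :: "'a \<Rightarrow> 'a \<Rightarrow> bool" and d k :: nat
  assumes "connected_graph V E"
    and "diameter V E = d"
    and "metric_dimension V E = k"
  shows "(real (TC V (distance_hyperedges V E)) - 1) / real d \<le> real k
       \<and> k \<le> TC V (distance_hyperedges V E)"
proof -
  have g: "graph V E" using assms(1) unfolding connected_graph_def by simp
  have fin: "finite V" and ne: "V \<noteq> {}" using g unfolding graph_def by auto
  have s: "\<forall>u v. E u v \<longrightarrow> E v u" using g unfolding graph_def by auto
  have dle: "\<And>u v. u \<in> V \<Longrightarrow> v \<in> V \<Longrightarrow> gdist E u v \<le> d"
    using gdist_le_diam[OF g] assms(2) by blast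
  have "resolving_set V E V" unfolding resolving_set_def
  proof (intro conjI ballI impI)
    fix u v assume uv: "u \<in> V" "v \<in> V" "u \<noteq> v"
    have "gdist E u v \<noteq> 0" using gdist_zero[OF assms(1) uv(1,2)] uv(3) by blast
    then show "\<exists>x\<in>V. gdist E x u \<noteq> gdist E x v" using uv gdist_refl[of E u] by (intro bexI[of _ u]) auto
  qed simp
  then have "\<exists>R. resolving_set V E R \<and> card R = card V" by blast
  then have "\<exists>R. resolving_set V E R \<and> card R = (LEAST k. \<exists>R. resolving_set V E R \<and> card R = k)"
    by (rule LeastI[where P="\<lambda>k. \<exists>R. resolving_set V E R \<and> card R = k"])
  then have "\<exists>R. resolving_set V E R \<and> card R = k"
    using assms(3) unfolding metric_dimension_def by simp
  then obtain R where R: "resolving_set V E R" "card R = k" by blast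
  have Rsub: "R \<subseteq> V" using R unfolding resolving_set_def by simp
  have finR: "finite R" using Rsub fin finite_subset by blast
  obtain v0 where v0: "v0 \<in> V" using ne by blast
  define T where "T = (\<lambda>(x,r). gball V E x r) ` (R \<times> {..<d}) \<union> {gball V E v0 d}"
  have ballV: "gball V E v0 d = V" unfolding gball_def using dle v0 by auto
  have tc: "test_cover V (distance_hyperedges V E) T" unfolding test_cover_def
  proof (intro conjI ballI impI)
    show "T \<subseteq> distance_hyperedges V E"
      unfolding T_def distance_hyperedges_def using Rsub v0 by auto
    fix v assume "v \<in> V" then show "\<exists>S\<in>T. v \<in> S" using ballV unfolding T_def by auto
  next
    fix u v assume uv: "u \<in> V" "v \<in> V" "u \<noteq> v"
    then obtain x where x: "x \<in> R" "gdist E x u \<noteq> gdist E x v"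
      using R(1) unfolding resolving_set_def by blast
    have xV: "x \<in> V" using x Rsub by auto
    have sx: "\<And>w. gdist E w x = gdist E x w" using gdist_sym[OF s] by blast
    show "\<exists>S\<in>T. (u \<in> S) \<noteq> (v \<in> S)"
    proof (cases "gdist E x u < gdist E x v")
      case True
      have "gdist E x v \<le> d" using dle xV uv by blast
      then have "gball V E x (gdist E x u) \<in> T" unfolding T_def using x True by auto
      moreover have "u \<in> gball V E x (gdist E x u)" "v \<notin> gball V E x (gdist E x u)"
        unfolding gball_def using uv True sx by auto
      ultimately show ?thesis by blast
    next
      case False
      then have F: "gdist E x v < gdist E x u" using x by simp
      have "gdist E x u \<le> d" using dle xV uv by blast
      then have "gball V E x (gdist E x v) \<in> T" unfolding T_def using x F by auto
      moreover have "v \<in> gball V E x (gdist E x v)" "u \<notin> gball V E x (gdist E x v)"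
        unfolding gball_def using uv F sx by auto
      ultimately show ?thesis by blast
    qed
  qed
  have finT: "finite T" unfolding T_def using finR by simp
  have "card T \<le> card ((\<lambda>(x,r). gball V E x r) ` (R \<times> {..<d})) + 1"
    unfolding T_def using card_Un_le[of "(\<lambda>(x,r). gball V E x r) ` (R \<times> {..<d})" "{gball V E v0 d}"] by simp
  also have "\<dots> \<le> card (R \<times> {..<d}) + 1" using card_image_le[of "R \<times> {..<d}" "\<lambda>(x,r). gball V E x r"] finR by simp
  also have "\<dots> = k * d + 1" using R(2) by (simp add: card_cartesian_product)
  finally have cT: "card T \<le> k * d + 1" .
  have ex: "\<exists>T'. test_cover V (distance_hyperedges V E) T' \<and> finite T' \<and> card T' = card T"
    using tc finT by blast
  have TCle: "TC V (distance_hyperedges V E) \<le> k * d + 1"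
    unfolding TC_def using Least_le[of "\<lambda>k. \<exists>T'. test_cover V (distance_hyperedges V E) T' \<and> finite T' \<and> card T' = k" "card T"] ex cT by (meson order_trans)
  have part1: "(real (TC V (distance_hyperedges V E)) - 1) / real d \<le> real k"
  proof (cases "d = 0")
    case True then show ?thesis by simp
  next
    case False
    have "real (TC V (distance_hyperedges V E)) - 1 \<le> real k * real d"
      using TCle proof - have "real (TC V (distance_hyperedges V E)) \<le> real (k*d+1)" using TCle by linarith then show ?thesis by simp qed
    then show ?thesis using False by (simp add: divide_le_eq)
  qed
  obtain T0 where T0: "test_cover V (distance_hyperedges V E) T0" "finite T0"
    "card T0 = TC V (distance_hyperedges V E)"
    using LeastI_ex[of "\<lambda>k. \<exists>T'. test_cover V (distance_hyperedges V E) T' \<and> finite T' \<and> card T' = k"] ex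
    unfolding TC_def by blast
  have "\<forall>S\<in>T0. \<exists>c r. c \<in> V \<and> S = gball V E c r"
    using T0(1) unfolding test_cover_def distance_hyperedges_def by blast
  then obtain cen rad where cr: "\<And>S. S \<in> T0 \<Longrightarrow> cen S \<in> V \<and> S = gball V E (cen S) (rad S)"
    by metis
  have res: "resolving_set V E (cen ` T0)" unfolding resolving_set_def
  proof (intro conjI ballI impI)
    show "cen ` T0 \<subseteq> V" using cr by auto
    fix u v assume uv: "u \<in> V" "v \<in> V" "u \<noteq> v"
    then obtain S where S: "S \<in> T0" "(u \<in> S) \<noteq> (v \<in> S)" using T0(1) unfolding test_cover_def by blast
    have sx: "\<And>w. gdist E w (cen S) = gdist E (cen S) w" using gdist_sym[OF s] by blast
    have "gdist E (cen S) u \<noteq> gdist E (cen S) v"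
      using S cr[OF S(1)] uv sx unfolding gball_def by (metis (no_types, lifting) mem_Collect_eq)
    then show "\<exists>x\<in>cen ` T0. gdist E x u \<noteq> gdist E x v" using S by blast
  qed
  have "k \<le> card (cen ` T0)" using assms(3) res unfolding metric_dimension_def
    using Least_le[where P="\<lambda>k. \<exists>R. resolving_set V E R \<and> card R = k" and k="card (cen ` T0)"] by blast
  also have "\<dots> \<le> card T0" by (rule card_image_le[OF T0(2)])
  finally show ?thesis using part1 T0(3) by simp
qed

end
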